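(* Consider the $k$-agent prophet game with random tie-breaking, and assume $n\ge k$. For every agent $i$, the single threshold strategy $T^k=\frac{1}{2k}\sum_{j=1}^{k}\mathbb{E}[y_j]$ guarantees agent $i$ an expected utility of at least $\frac{1}{2k}\mathbb{E}\big[\sum_{j=1}^{k}y_j\big]$, regardless of the strategies of the other agents.
   Context: Prophet game with competing agents: there are $n$ rewards $v_1,\ldots,v_n$, where $v_t$ is a non-negative real random variable drawn from a known distribution $F_t$ (with finite mean), independently across $t$. There are $k$ agents. At each time $t=1,\ldots,n$, the value $v_t$ is revealed to all agents, and every active agent (an agent who has not yet received a reward) decides whether to select $v_t$. If exactly one agent selects $v_t$, it is assigned to that agent. If several agents select it, it is assigned to one of them by the tie-breaking rule. Under random tie-breaking, the reward goes to a uniformly random agent among those selecting it. An agent who receives a reward becomes inactive, and unselected rewards are lost forever. A strategy of an agent is a (possibly randomized) rule that, for each $t$, decides whether to select $v_t$ based on $t$, the realized value $v_t$, and the set of currently active agents. The utility $u_i(S)$ of agent $i$ under strategy profile $S=(S_i,S_{-i})$ is her expected received reward (zero if she receives none). A strategy $S_i$ guarantees agent $i$ utility $\alpha$ if $u_i(S_i,S_{-i})\ge\alpha$ for every $S_{-i}$. The single threshold strategy $T$ selects $v_t$ if and only if the agent is still active and $v_t\ge T$. For $j=1,\ldots,n$, $y_j$ denotes the $j$-th largest value among $v_1,\ldots,v_n$. *)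

theory Defs
  imports "HOL-Probability.Probability"
begin

text \<open>Times are 0,...,n-1 (paper: 1..n); agents are 0,...,k-1.
  A strategy profile p assigns to agent j, time t, realized value v and set A of
  currently active agents the probability p j t v A in [0,1] with which agent j
  (if active) selects v_t. Randomization is independent across agents and times
  (behavioral strategies). Random tie-breaking: the reward goes to a uniformly
  random selecting agent.\<close>

definition sel_prob :: "(nat \<Rightarrow> nat \<Rightarrow> real \<Rightarrow> nat set \<Rightarrow> real) \<Rightarrow> nat \<Rightarrow> real \<Rightarrow> nat set \<Rightarrow> nat set \<Rightarrow> real" where
  "sel_prob p t v A S = (\<Prod>j\<in>S. p j t v A) * (\<Prod>j\<in>A - S. 1 - p j t v A)"

text \<open>cont_util p F i n m A: expected reward agent i receives during the last m
  time steps (times n-m,...,n-1), given that the set of active agents at time n-m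
  is A.\<close>
primrec cont_util :: "(nat \<Rightarrow> nat \<Rightarrow> real \<Rightarrow> nat set \<Rightarrow> real) \<Rightarrow> (nat \<Rightarrow> real measure)
    \<Rightarrow> nat \<Rightarrow> nat \<Rightarrow> nat \<Rightarrow> nat set \<Rightarrow> real" where
  "cont_util p F i n 0 A = 0"
| "cont_util p F i n (Suc m) A =
     (let t = n - Suc m in
      \<integral>v. (\<Sum>S\<in>Pow A. sel_prob p t v A S *
              (if S = {} then cont_util p F i n m A
               else (1 / real (card S)) *
                    (\<Sum>j\<in>S. (if j = i then v else 0) + cont_util p F i n m (A - {j}))))
        \<partial>F t)"

definition utility :: "(nat \<Rightarrow> nat \<Rightarrow> real \<Rightarrow> nat set \<Rightarrow> real) \<Rightarrow> (nat \<Rightarrow> real measure)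
    \<Rightarrow> nat \<Rightarrow> nat \<Rightarrow> nat \<Rightarrow> real" where
  "utility p F k n i = cont_util p F i n n {0..<k}"

definition valid_strategy :: "(nat \<Rightarrow> real \<Rightarrow> nat set \<Rightarrow> real) \<Rightarrow> bool" where
  "valid_strategy s \<longleftrightarrow> (\<forall>t v A. 0 \<le> s t v A \<and> s t v A \<le> 1)
      \<and> (\<forall>t A. (\<lambda>v. s t v A) \<in> borel_measurable borel)"

text \<open>Single threshold strategy T: select iff v \<ge> T (activity is handled by the game).\<close>
definition threshold_strategy :: "real \<Rightarrow> nat \<Rightarrow> real \<Rightarrow> nat set \<Rightarrow> real" where
  "threshold_strategy T t v A = (if T \<le> v then 1 else 0)"

text \<open>y_j: the j-th largest (j \<ge> 1) among v_0,...,v_{n-1}.\<close>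
definition jth_largest :: "nat \<Rightarrow> (nat \<Rightarrow> real) \<Rightarrow> nat \<Rightarrow> real" where
  "jth_largest n v j = rev (sort (map v [0..<n])) ! (j - 1)"

end

theory Submission
  imports Defs
begin


lemma sel_sum:
  assumes "finite A"
  shows "(\<Sum>S\<in>Pow A. sel_prob p t v A S) = 1"
proof -
  have "(\<Prod>j\<in>A. p j t v A + (1 - p j t v A)) = (\<Sum>S\<in>Pow A. sel_prob p t v A S)"
    unfolding sel_prob_def by (rule prod_add[OF assms])
  then show ?thesis by simp
qed

lemma sel_zero1:
  assumes "finite A" "i \<in> A" "i \<notin> S" "p i t v A = 1"
  shows "sel_prob p t v A S = 0"
proof -
  have "(\<Prod>j\<in>A - S. 1 - p j t v A) = 0"
    using assms by (intro prod_zero) auto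
  then show ?thesis unfolding sel_prob_def by simp
qed

lemma sel_zero2:
  assumes "finite S" "i \<in> S" "p i t v A = 0"
  shows "sel_prob p t v A S = 0"
proof -
  have "(\<Prod>j\<in>S. p j t v A) = 0"
    using assms by (intro prod_zero) auto
  then show ?thesis unfolding sel_prob_def by simp
qed

lemma sel_nonneg:
  assumes "\<And>j. j \<in> A \<Longrightarrow> 0 \<le> p j t v A \<and> p j t v A \<le> 1" "S \<subseteq> A"
  shows "0 \<le> sel_prob p t v A S"
  unfolding sel_prob_def using assms
  by (intro mult_nonneg_nonneg prod_nonneg) auto

lemma cu_zero: "i \<notin> A \<Longrightarrow> cont_util p F i n m A = 0"
proof (induction m arbitrary: A)
  case 0 then show ?case by simp
next
  case (Suc m)
  have "(\<Sum>S\<in>Pow A. sel_prob p (n - Suc m) v A S *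
              (if S = {} then cont_util p F i n m A
               else 1 / real (card S) *
                    (\<Sum>j\<in>S. (if j = i then v else 0) + cont_util p F i n m (A - {j})))) = 0" for v
  proof (intro sum.neutral ballI)
    fix S assume S: "S \<in> Pow A"
    have "(\<Sum>j\<in>S. (if j = i then v else 0) + cont_util p F i n m (A - {j})) = 0"
      using S Suc by (intro sum.neutral) auto
    then show "sel_prob p (n - Suc m) v A S *
              (if S = {} then cont_util p F i n m A
               else 1 / real (card S) *
                    (\<Sum>j\<in>S. (if j = i then v else 0) + cont_util p F i n m (A - {j}))) = 0"
      using Suc by simp
  qed
  then show ?case by (simp add: Let_def)
qed




lemma sel_meas:
  assumes "\<And>j. j \<in> A \<Longrightarrow> (\<lambda>v. p j t v A) \<in> borel_measurable M" "S \<subseteq> A"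
  shows "(\<lambda>v. sel_prob p t v A S) \<in> borel_measurable M"
  unfolding sel_prob_def using assms
  by (intro borel_measurable_times borel_measurable_prod borel_measurable_diff) auto

lemma integrand_integrable:
  fixes C :: "nat set \<Rightarrow> real"
  assumes ps: "prob_space M" and intv: "integrable M (\<lambda>v. v)" and fin: "finite A"
    and p01: "\<And>j v. j \<in> A \<Longrightarrow> 0 \<le> p j t v A \<and> p j t v A \<le> 1"
    and meas: "\<And>j. j \<in> A \<Longrightarrow> (\<lambda>v. p j t v A) \<in> borel_measurable M"
  shows "integrable M (\<lambda>v. \<Sum>S\<in>Pow A. sel_prob p t v A S *
      (if S = {} then C A else 1 / real (card S) * (\<Sum>j\<in>S. (if j = i then v else 0) + C (A - {j}))))"
proof (rule Bochner_Integration.integrable_sum)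
  interpret prob_space M by fact
  fix S assume S: "S \<in> Pow A"
  let ?f = "\<lambda>v. (if S = {} then C A else 1 / real (card S) * (\<Sum>j\<in>S. (if j = i then v else 0) + C (A - {j})))"
  have fi: "integrable M ?f"
  proof (cases "S = {}")
    case True then show ?thesis by simp
  next
    case False
    have "integrable M (\<lambda>v. (if j = i then v else 0) + C (A - {j}))" for j
      using intv by (cases "j = i") auto
    then show ?thesis using False by (simp add: Bochner_Integration.integrable_sum)
  qed
  show "integrable M (\<lambda>v. sel_prob p t v A S * ?f v)"
  proof (rule Bochner_Integration.integrable_bound[OF fi])
    show "(\<lambda>v. sel_prob p t v A S * ?f v) \<in> borel_measurable M"
      using sel_meas[of A p t M S, OF meas] S borel_measurable_integrable[OF fi] by auto
    have "norm (sel_prob p t v A S * ?f v) \<le> norm (?f v)" for v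
    proof -
      have "0 \<le> sel_prob p t v A S" using sel_nonneg[of A p t v S] p01 S by auto
      moreover have "sel_prob p t v A S \<le> 1"
      proof -
        have "sel_prob p t v A S \<le> (\<Sum>S\<in>Pow A. sel_prob p t v A S)"
          using S fin sel_nonneg[of A p t v] p01 by (intro member_le_sum) auto
        then show ?thesis using sel_sum[OF fin] by simp
      qed
      ultimately show ?thesis by (simp add: abs_mult mult_left_le_one_le)
    qed
    then show "AE v in M. norm (sel_prob p t v A S * ?f v) \<le> norm (?f v)" by simp
  qed
qed




lemma arith1:
  fixes s k M T v X :: real
  assumes "1 \<le> s" "s \<le> k" "M \<le> T" "T \<le> v" "v + (s - 1) * M \<le> X"
  shows "M + (v - T) / k \<le> (1 / s) * X"
proof -
  have "(v - M) / k \<le> (v - M) / s"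
    using assms by (intro divide_left_mono) auto
  moreover have "(v - T) / k \<le> (v - M) / k" using assms by (intro divide_right_mono) auto
  moreover have "M + (v - M) / s = (v + (s - 1) * M) / s" using assms by (simp add: field_simps)
  moreover have "(v + (s - 1) * M) / s \<le> X / s" using assms by (intro divide_right_mono) auto
  ultimately show ?thesis by simp
qed

lemma card_sum_lower:
  fixes f :: "nat \<Rightarrow> real"
  assumes "finite S" "\<And>j. j \<in> S \<Longrightarrow> M \<le> f j"
  shows "real (card S) * M \<le> (\<Sum>j\<in>S. f j)"
  using sum_mono[of S "\<lambda>_. M" f] assms by simp




lemma pointwise:
  fixes C :: "nat set \<Rightarrow> real" and k :: nat
  assumes fin: "finite A" and cardA: "card A \<le> k" and iA: "i \<in> A"
    and C0: "C (A - {i}) = 0" and CA: "M \<le> C A"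
    and Cj: "\<And>j. j \<in> A \<Longrightarrow> j \<noteq> i \<Longrightarrow> M \<le> C (A - {j})"
    and p01: "\<And>j. j \<in> A \<Longrightarrow> 0 \<le> p j t v A \<and> p j t v A \<le> 1"
    and pi: "p i t v A = (if T \<le> v then 1 else 0)"
    and MT: "M \<le> T"
  shows "M + max 0 (v - T) / real k \<le> (\<Sum>S\<in>Pow A. sel_prob p t v A S *
      (if S = {} then C A else 1 / real (card S) * (\<Sum>j\<in>S. (if j = i then v else 0) + C (A - {j}))))"
proof -
  let ?h = "\<lambda>S. (if S = {} then C A else 1 / real (card S) * (\<Sum>j\<in>S. (if j = i then v else 0) + C (A - {j})))"
  let ?b = "\<lambda>S. M + (if i \<in> S then max 0 (v - T) / real k else 0)"
  have per: "sel_prob p t v A S * ?b S \<le> sel_prob p t v A S * ?h S" if S: "S \<in> Pow A" for S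
  proof (cases "sel_prob p t v A S = 0")
    case True then show ?thesis by simp
  next
    case False
    have sp0: "0 \<le> sel_prob p t v A S" using sel_nonneg[of A p t v S] p01 S by auto
    have finS: "finite S" using S fin finite_subset by auto
    have "?b S \<le> ?h S"
    proof (cases "i \<in> S")
      case True
      have Tv: "T \<le> v"
      proof (rule ccontr)
        assume "\<not> T \<le> v"
        then have "p i t v A = 0" using pi by simp
        then show False using sel_zero2[OF finS True] False by simp
      qed
      have Sne: "S \<noteq> {}" using True by auto
      have cS: "1 \<le> card S" using finS Sne by (simp add: Suc_le_eq card_gt_0_iff)
      have cSk: "card S \<le> k" using card_mono[OF fin, of S] S cardA by simp
      have "(\<Sum>j\<in>S. (if j = i then v else 0) + C (A - {j}))
          = (v + C (A - {i})) + (\<Sum>j\<in>S - {i}. (if j = i then v else 0) + C (A - {j}))"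
        using True finS by (simp add: sum.remove)
      also have "(\<Sum>j\<in>S - {i}. (if j = i then v else 0) + C (A - {j})) = (\<Sum>j\<in>S - {i}. C (A - {j}))"
        by (intro sum.cong) auto
      finally have eq: "(\<Sum>j\<in>S. (if j = i then v else 0) + C (A - {j})) = v + (\<Sum>j\<in>S - {i}. C (A - {j}))"
        using C0 by simp
      have "real (card (S - {i})) * M \<le> (\<Sum>j\<in>S - {i}. C (A - {j}))"
        using S finS Cj by (intro card_sum_lower) auto
      moreover have "real (card (S - {i})) = real (card S) - 1" using True finS cS by (simp add: of_nat_diff)
      ultimately have "v + (real (card S) - 1) * M \<le> (\<Sum>j\<in>S. (if j = i then v else 0) + C (A - {j}))"
        using eq by simp
      then have "M + (v - T) / real k \<le> 1 / real (card S) * (\<Sum>j\<in>S. (if j = i then v else 0) + C (A - {j}))"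
        using cS cSk MT Tv by (intro arith1) auto
      then show ?thesis using True Sne Tv by simp
    next
      case False
      show ?thesis
      proof (cases "S = {}")
        case True then show ?thesis using CA by simp
      next
        case Sne: False
        have cS: "1 \<le> card S" using finS Sne by (simp add: Suc_le_eq card_gt_0_iff)
        have "real (card S) * M \<le> (\<Sum>j\<in>S. (if j = i then v else 0) + C (A - {j}))"
          using S finS False Cj by (intro card_sum_lower) auto
        then have "M \<le> 1 / real (card S) * (\<Sum>j\<in>S. (if j = i then v else 0) + C (A - {j}))"
          using cS by (simp add: field_simps)
        then show ?thesis using False Sne by simp
      qed
    qed
    then show ?thesis using sp0 by (rule mult_left_mono)
  qed
  have "(\<Sum>S\<in>Pow A. sel_prob p t v A S * ?b S) = M + max 0 (v - T) / real k"
  proof (cases "T \<le> v")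
    case True
    have "(\<Sum>S\<in>Pow A. sel_prob p t v A S * ?b S) = (\<Sum>S\<in>Pow A. sel_prob p t v A S * (M + max 0 (v - T) / real k))"
    proof (intro sum.cong refl)
      fix S assume "S \<in> Pow A"
      show "sel_prob p t v A S * ?b S = sel_prob p t v A S * (M + max 0 (v - T) / real k)"
        using sel_zero1[OF fin iA, of S p t v] pi True by (cases "i \<in> S") auto
    qed
    also have "\<dots> = M + max 0 (v - T) / real k" using sel_sum[OF fin] by (simp add: sum_distrib_right[symmetric])
    finally show ?thesis .
  next
    case False
    then have "(\<Sum>S\<in>Pow A. sel_prob p t v A S * ?b S) = (\<Sum>S\<in>Pow A. sel_prob p t v A S * M)"
      by (intro sum.cong refl) (simp add: max_def)
    also have "\<dots> = M" using sel_sum[OF fin] by (simp add: sum_distrib_right[symmetric])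
    finally show ?thesis using False by simp
  qed
  moreover have "(\<Sum>S\<in>Pow A. sel_prob p t v A S * ?b S) \<le> (\<Sum>S\<in>Pow A. sel_prob p t v A S * ?h S)"
    by (intro sum_mono per)
  ultimately show ?thesis by simp
qed




lemma main_induct:
  fixes q :: "nat \<Rightarrow> nat \<Rightarrow> real \<Rightarrow> nat set \<Rightarrow> real" and F :: "nat \<Rightarrow> real measure" and k :: nat
  assumes ps: "\<And>t. t < n \<Longrightarrow> prob_space (F t)"
    and intv: "\<And>t. t < n \<Longrightarrow> integrable (F t) (\<lambda>v. v)"
    and q01: "\<And>j t v A. A \<subseteq> {0..<k} \<Longrightarrow> j \<in> A \<Longrightarrow> 0 \<le> q j t v A \<and> q j t v A \<le> 1"
    and qmeas: "\<And>j t A. t < n \<Longrightarrow> A \<subseteq> {0..<k} \<Longrightarrow> j \<in> A \<Longrightarrow> (\<lambda>v. q j t v A) \<in> borel_measurable (F t)"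
    and qi: "\<And>t v A. q i t v A = (if T \<le> v then 1 else 0)"
  shows "m \<le> n \<Longrightarrow> i \<in> A \<Longrightarrow> A \<subseteq> {0..<k} \<Longrightarrow>
    min T ((1 / real k) * (\<Sum>t\<in>{n-m..<n}. \<integral>v. max 0 (v - T) \<partial>F t)) \<le> cont_util q F i n m A"
proof (induction m arbitrary: A)
  case 0 then show ?case by simp
next
  case (Suc m)
  define t where "t = n - Suc m"
  have tn: "t < n" using Suc by (simp add: t_def)
  define g where "g = (\<lambda>t. \<integral>v. max 0 (v - T) \<partial>F t)"
  define M where "M = min T ((1 / real k) * (\<Sum>t\<in>{n-m..<n}. g t))"
  have finA: "finite A" using Suc finite_subset by blast
  have cardA: "card A \<le> k" using card_mono[OF _ Suc.prems(3)] by simp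
  have kpos: "0 < k" using Suc by auto
  have IH: "M \<le> cont_util q F i n m A'" if "i \<in> A'" "A' \<subseteq> {0..<k}" for A'
    using Suc.IH[of A'] Suc.prems that by (simp add: M_def g_def)
  interpret P: prob_space "F t" using ps[OF tn] .
  let ?h = "\<lambda>v. \<Sum>S\<in>Pow A. sel_prob q t v A S *
      (if S = {} then cont_util q F i n m A else 1 / real (card S) *
        (\<Sum>j\<in>S. (if j = i then v else 0) + cont_util q F i n m (A - {j})))"
  have hint: "integrable (F t) ?h"
    using Suc.prems q01 qmeas tn
    by (intro integrand_integrable[OF ps[OF tn] intv[OF tn] finA]) auto
  have gint: "integrable (F t) (\<lambda>v. M + max 0 (v - T) / real k)"
    using intv[OF tn] by auto
  have pw: "M + max 0 (v - T) / real k \<le> ?h v" for v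
  proof (rule pointwise[OF finA cardA Suc.prems(2)])
    show "cont_util q F i n m (A - {i}) = 0" by (simp add: cu_zero)
    show "M \<le> cont_util q F i n m A" using IH Suc.prems by auto
    show "M \<le> cont_util q F i n m (A - {j})" if "j \<in> A" "j \<noteq> i" for j
      using IH[of "A - {j}"] Suc.prems that by auto
    show "0 \<le> q j t v A \<and> q j t v A \<le> 1" if "j \<in> A" for j using q01 Suc.prems that by auto
    show "q i t v A = (if T \<le> v then 1 else 0)" by (rule qi)
    show "M \<le> T" by (simp add: M_def)
  qed
  have I1: "(\<integral>v. M + max 0 (v - T) / real k \<partial>F t) \<le> (\<integral>v. ?h v \<partial>F t)"
    by (intro integral_mono[OF gint hint] pw)
  have I2: "(\<integral>v. M + max 0 (v - T) / real k \<partial>F t) = M + g t / real k"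
    using intv[OF tn] by (simp add: g_def P.prob_space)
  have I3: "cont_util q F i n (Suc m) A = (\<integral>v. ?h v \<partial>F t)"
    by (simp add: t_def Let_def)
  have I4: "(\<Sum>t\<in>{n - Suc m..<n}. g t) = g t + (\<Sum>t\<in>{n-m..<n}. g t)"
  proof -
    have "{n - Suc m..<n} = insert t {n-m..<n}" using Suc.prems by (auto simp: t_def)
    moreover have "t \<notin> {n-m..<n}" using Suc.prems by (auto simp: t_def)
    ultimately show ?thesis by simp
  qed
  have gt0: "0 \<le> g t" unfolding g_def by (rule Bochner_Integration.integral_nonneg) auto
  have I5: "min T ((1 / real k) * (g t + (\<Sum>t\<in>{n-m..<n}. g t))) \<le> M + g t / real k"
    using kpos gt0 by (auto simp: M_def min_def field_simps)
  have "min T ((1 / real k) * (\<Sum>t\<in>{n - Suc m..<n}. g t)) \<le> cont_util q F i n (Suc m) A"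
  proof -
    have "min T ((1 / real k) * (\<Sum>t\<in>{n - Suc m..<n}. g t)) = min T ((1 / real k) * (g t + (\<Sum>t\<in>{n-m..<n}. g t)))"
      by (simp only: I4)
    also have "\<dots> \<le> M + g t / real k" by (rule I5)
    also have "\<dots> \<le> (\<integral>v. ?h v \<partial>F t)" using I1 I2 by simp
    also have "\<dots> = cont_util q F i n (Suc m) A" using I3 by simp
    finally show ?thesis .
  qed
  then show ?case by (simp add: g_def)
qed




lemma jl_eq: "1 \<le> j \<Longrightarrow> j \<le> n \<Longrightarrow> jth_largest n v j = sort (map v [0..<n]) ! (n - j)"
  unfolding jth_largest_def by (simp add: rev_nth)

lemma jl_in: "1 \<le> j \<Longrightarrow> j \<le> n \<Longrightarrow> \<exists>t<n. jth_largest n v j = v t"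
proof -
  assume a: "1 \<le> j" "j \<le> n"
  have "sort (map v [0..<n]) ! (n - j) \<in> set (sort (map v [0..<n]))"
    using a by (intro nth_mem) auto
  then show ?thesis using a by (auto simp: jl_eq)
qed

lemma jl_bound: "1 \<le> j \<Longrightarrow> j \<le> n \<Longrightarrow> \<bar>jth_largest n v j\<bar> \<le> (\<Sum>t<n. \<bar>v t\<bar>)"
proof -
  assume a: "1 \<le> j" "j \<le> n"
  then obtain t where "t < n" "jth_largest n v j = v t" using jl_in by blast
  then show ?thesis by (auto intro!: member_le_sum)
qed

lemma len_filter_map: "length (filter P (map v [0..<n])) = card {t. t < n \<and> P (v t)}"
  by (auto simp: length_filter_conv_card intro!: arg_cong[where f=card])

lemma len_filter_sort: "length (filter P (sort xs)) = length (filter P xs)"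
  by (metis mset_filter mset_sort size_mset)

lemma sorted_count:
  fixes L :: "real list"
  assumes s: "sorted L" and j: "1 \<le> j" "j \<le> length L"
  shows "a \<le> L ! (length L - j) \<longleftrightarrow> j \<le> length (filter (\<lambda>x. a \<le> x) L)"
proof -
  let ?n = "length L"
  have lf: "length (filter (\<lambda>x. a \<le> x) L) = card {i. i < ?n \<and> a \<le> L ! i}"
    by (simp add: length_filter_conv_card)
  show ?thesis
  proof
    assume h: "a \<le> L ! (?n - j)"
    have "{?n - j..<?n} \<subseteq> {i. i < ?n \<and> a \<le> L ! i}"
    proof
      fix i assume "i \<in> {?n - j..<?n}"
      then have "L ! (?n - j) \<le> L ! i" "i < ?n" using s by (auto intro: sorted_nth_mono)
      then show "i \<in> {i. i < ?n \<and> a \<le> L ! i}" using h by auto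
    qed
    from card_mono[OF _ this] have "card {?n - j..<?n} \<le> card {i. i < ?n \<and> a \<le> L ! i}" by auto
    then show "j \<le> length (filter (\<lambda>x. a \<le> x) L)" using j lf by simp
  next
    assume h: "j \<le> length (filter (\<lambda>x. a \<le> x) L)"
    show "a \<le> L ! (?n - j)"
    proof (rule ccontr)
      assume "\<not> a \<le> L ! (?n - j)"
      then have lt: "L ! (?n - j) < a" by simp
      have "{i. i < ?n \<and> a \<le> L ! i} \<subseteq> {Suc (?n - j)..<?n}"
      proof
        fix i assume i: "i \<in> {i. i < ?n \<and> a \<le> L ! i}"
        have "\<not> i \<le> ?n - j"
        proof
          assume "i \<le> ?n - j"
          then have "L ! i \<le> L ! (?n - j)" using s j by (intro sorted_nth_mono) auto
          then show False using i lt by auto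
        qed
        then show "i \<in> {Suc (?n - j)..<?n}" using i by auto
      qed
      from card_mono[OF _ this] have "card {i. i < ?n \<and> a \<le> L ! i} \<le> card {Suc (?n - j)..<?n}" by auto
      then show False using h lf j by simp
    qed
  qed
qed

lemma jl_ge_iff:
  assumes "1 \<le> j" "j \<le> n"
  shows "a \<le> jth_largest n v j \<longleftrightarrow> j \<le> card {t. t < n \<and> a \<le> v t}"
proof -
  have "a \<le> jth_largest n v j \<longleftrightarrow> j \<le> length (filter (\<lambda>x. a \<le> x) (sort (map v [0..<n])))"
    using sorted_count[of "sort (map v [0..<n])" j a] assms by (simp add: jl_eq)
  also have "\<dots> \<longleftrightarrow> j \<le> card {t. t < n \<and> a \<le> v t}"
    by (simp only: len_filter_sort len_filter_map)
  finally show ?thesis .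
qed

lemma shift1: "(\<Sum>j=1..n. (g::nat\<Rightarrow>real) j) = (\<Sum>i<n. g (Suc i))"
  by (induction n) auto

lemma sum_pos_perm:
  fixes f :: "real \<Rightarrow> real"
  shows "(\<Sum>j=1..n. f (jth_largest n v j)) = (\<Sum>t<n. f (v t))"
proof -
  have "(\<Sum>j=1..n. f (jth_largest n v j)) = (\<Sum>i<n. f (rev (sort (map v [0..<n])) ! i))"
  proof -
    have "(\<Sum>j=1..n. f (jth_largest n v j)) = (\<Sum>i<n. f (jth_largest n v (Suc i)))"
      by (rule shift1)
    then show ?thesis by (simp add: jth_largest_def)
  qed
  also have "\<dots> = sum_list (map f (rev (sort (map v [0..<n]))))"
    by (simp add: sum_list_sum_nth atLeast0LessThan)
  also have "\<dots> = sum_list (map f (map v [0..<n]))"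
    by (simp only: sum_mset_sum_list[symmetric] mset_map mset_rev mset_sort)
  also have "\<dots> = (\<Sum>t<n. f (v t))"
    by (simp add: sum_list_sum_nth atLeast0LessThan)
  finally show ?thesis .
qed

lemma comb_ineq:
  assumes "k \<le> n"
  shows "(\<Sum>j=1..k. jth_largest n v j) \<le> real k * T + (\<Sum>t<n. max 0 (v t - T))"
proof -
  have "(\<Sum>j=1..k. jth_largest n v j) \<le> (\<Sum>j=1..k. T + max 0 (jth_largest n v j - T))"
    by (intro sum_mono) auto
  also have "\<dots> = real k * T + (\<Sum>j=1..k. max 0 (jth_largest n v j - T))"
    by (simp add: sum.distrib)
  also have "(\<Sum>j=1..k. max 0 (jth_largest n v j - T)) \<le> (\<Sum>j=1..n. max 0 (jth_largest n v j - T))"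
    using assms by (intro sum_mono2) auto
  also have "\<dots> = (\<Sum>t<n. max 0 (v t - T))"
    by (rule sum_pos_perm)
  finally show ?thesis by simp
qed




lemma card_as_sum: fixes n :: nat shows "real (card {t. t < n \<and> P t}) = (\<Sum>t<n. if P t then 1 else 0)"
proof -
  have "{t. t < n \<and> P t} = {t \<in> {..<n}. P t}" by auto
  moreover have "(\<Sum>t<n. if P t then 1 else 0) = (\<Sum>t\<in>{t \<in> {..<n}. P t}. 1::real)"
    by (rule sum.inter_filter[symmetric]) simp
  ultimately show ?thesis by simp
qed

lemma comp_meas:
  fixes F :: "nat \<Rightarrow> real measure" and t n :: nat
  assumes "t < n" "sets (F t) = sets borel"
  shows "(\<lambda>w. w t) \<in> borel_measurable (PiM {0..<n} F)"
proof -
  have "(\<lambda>w. w t) \<in> measurable (PiM {0..<n} F) (F t)"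
    using assms by (intro measurable_component_singleton) auto
  moreover have "measurable (PiM {0..<n} F) (F t) = measurable (PiM {0..<n} F) borel"
    by (rule measurable_cong_sets[OF refl assms(2)])
  ultimately show ?thesis by simp
qed

lemma jl_meas:
  fixes F :: "nat \<Rightarrow> real measure"
  assumes borel: "\<And>t. t < n \<Longrightarrow> sets (F t) = sets borel" and j: "1 \<le> j" "j \<le> n"
  shows "(\<lambda>w. jth_largest n w j) \<in> borel_measurable (PiM {0..<n} F)"
  unfolding borel_measurable_iff_ge
proof
  fix a :: real
  let ?S = "\<lambda>w. (\<Sum>t<n. if a \<le> w t then 1 else 0) :: real"
  have m: "?S \<in> borel_measurable (PiM {0..<n} F)"
  proof (intro borel_measurable_sum)
    fix t assume "t \<in> {..<n}"
    then have "(\<lambda>w. w t) \<in> borel_measurable (PiM {0..<n} F)" using comp_meas borel by auto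
    then show "(\<lambda>w. if a \<le> w t then 1 else 0 :: real) \<in> borel_measurable (PiM {0..<n} F)"
      by measurable
  qed
  have "{w \<in> space (PiM {0..<n} F). a \<le> jth_largest n w j} = {w \<in> space (PiM {0..<n} F). real j \<le> ?S w}"
  proof (intro Collect_cong conj_cong refl)
    fix w :: "nat \<Rightarrow> real"
    have "a \<le> jth_largest n w j \<longleftrightarrow> j \<le> card {t. t < n \<and> a \<le> w t}" by (rule jl_ge_iff[OF j])
    also have "\<dots> \<longleftrightarrow> real j \<le> real (card {t. t < n \<and> a \<le> w t})" by (rule of_nat_le_iff[symmetric])
    also have "\<dots> \<longleftrightarrow> real j \<le> ?S w" by (simp only: card_as_sum)
    finally show "a \<le> jth_largest n w j \<longleftrightarrow> real j \<le> ?S w" .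
  qed
  then show "{w \<in> space (PiM {0..<n} F). a \<le> jth_largest n w j} \<in> sets (PiM {0..<n} F)"
    using m unfolding borel_measurable_iff_ge by auto
qed

lemma marg_int:
  fixes f :: "real \<Rightarrow> real" and F :: "nat \<Rightarrow> real measure" and t n :: nat
  assumes ps: "\<And>t. t < n \<Longrightarrow> prob_space (F t)" and borel: "\<And>t. t < n \<Longrightarrow> sets (F t) = sets borel"
    and t: "t < n" and f: "f \<in> borel_measurable borel"
  shows "(\<integral>w. f (w t) \<partial>PiM {0..<n} F) = (\<integral>x. f x \<partial>F t)"
    and "integrable (PiM {0..<n} F) (\<lambda>w. f (w t)) \<longleftrightarrow> integrable (F t) f"
proof -
  have d: "distr (PiM {0..<n} F) (F t) (\<lambda>w. w t) = F t"
    using ps t by (intro distr_PiM_component) auto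
  have mc: "(\<lambda>w. w t) \<in> measurable (PiM {0..<n} F) (F t)"
    using t by (intro measurable_component_singleton) auto
  have "measurable (F t) borel = measurable borel borel"
    by (rule measurable_cong_sets[OF borel[OF t] refl])
  then have fm: "f \<in> borel_measurable (F t)" using f by blast
  show "(\<integral>w. f (w t) \<partial>PiM {0..<n} F) = (\<integral>x. f x \<partial>F t)"
    using integral_distr[OF mc fm] d by simp
  show "integrable (PiM {0..<n} F) (\<lambda>w. f (w t)) \<longleftrightarrow> integrable (F t) f"
    using integrable_distr_eq[OF mc fm] d by simp
qed




theorem mainTheorem2:
  fixes F :: "nat \<Rightarrow> real measure" and n k i :: nat
    and p :: "nat \<Rightarrow> nat \<Rightarrow> real \<Rightarrow> nat set \<Rightarrow> real"
  assumes dist: "\<And>t. t < n \<Longrightarrow> prob_space (F t)"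
    and borel: "\<And>t. t < n \<Longrightarrow> sets (F t) = sets borel"
    and nonneg: "\<And>t. t < n \<Longrightarrow> AE v in F t. 0 \<le> v"
    and finite_mean: "\<And>t. t < n \<Longrightarrow> integrable (F t) (\<lambda>v. v)"
    and k_pos: "1 \<le> k" and n_ge_k: "k \<le> n"
    and i_agent: "i < k"
    and others: "\<And>j. j < k \<Longrightarrow> j \<noteq> i \<Longrightarrow> valid_strategy (p j)"
  shows "utility (p(i := threshold_strategy
             ((1 / (2 * real k)) *
              (\<Sum>j=1..k. \<integral>v. jth_largest n v j \<partial>(PiM {0..<n} F))))) F k n i
         \<ge> (1 / (2 * real k)) * (\<integral>v. (\<Sum>j=1..k. jth_largest n v j) \<partial>(PiM {0..<n} F))"
proof -
  define P where "P = PiM {0..<n} F"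
  define T where "T = (1 / (2 * real k)) * (\<Sum>j=1..k. \<integral>v. jth_largest n v j \<partial>P)"
  define q where "q = p(i := threshold_strategy T)"
  interpret PP: prob_space P unfolding P_def using dist by (intro prob_space_PiM) auto
  have meas_borel: "measurable (F t) borel = measurable borel borel" if "t < n" for t
    by (rule measurable_cong_sets[OF borel[OF that] refl])
  have intabs: "integrable P (\<lambda>w. \<Sum>t<n. \<bar>w t\<bar>)"
  proof (rule Bochner_Integration.integrable_sum)
    fix t assume t: "t \<in> {..<n}"
    have "integrable (F t) (\<lambda>x. \<bar>x\<bar>)" using finite_mean t by auto
    then show "integrable P (\<lambda>w. \<bar>w t\<bar>)"
    proof -
      have tn: "t < n" using t by simp
      show ?thesis
        unfolding P_def using marg_int(2)[OF dist borel tn, where f="\<lambda>x. \<bar>x\<bar>"] \<open>integrable (F t) (\<lambda>x. \<bar>x\<bar>)\<close> by auto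
    qed
  qed
  have intY: "integrable P (\<lambda>w. jth_largest n w j)" if j: "j \<in> {1..k}" for j
  proof (rule Bochner_Integration.integrable_bound[OF intabs])
    show "(\<lambda>w. jth_largest n w j) \<in> borel_measurable P"
      unfolding P_def using j n_ge_k by (intro jl_meas borel) auto
    have "norm (jth_largest n w j) \<le> norm (\<Sum>t<n. \<bar>w t\<bar>)" for w
      using jl_bound[of j n w] j n_ge_k by (simp add: sum_nonneg)
    then show "AE w in P. norm (jth_largest n w j) \<le> norm (\<Sum>t<n. \<bar>w t\<bar>)" by simp
  qed
  have sumint: "(\<integral>v. (\<Sum>j=1..k. jth_largest n v j) \<partial>P) = (\<Sum>j=1..k. \<integral>v. jth_largest n v j \<partial>P)"
    using intY by (rule Bochner_Integration.integral_sum)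
  define g where "g = (\<lambda>t. \<integral>v. max 0 (v - T) \<partial>F t)"
  have intg: "integrable (F t) (\<lambda>x. max 0 (x - T))" if "t < n" for t
  proof -
    interpret prob_space "F t" using dist[OF that] .
    show ?thesis using finite_mean[OF that] by auto
  qed
  have intG: "integrable P (\<lambda>w. max 0 (w t - T))" if "t < n" for t
    unfolding P_def using marg_int(2)[OF dist borel that, where f="\<lambda>x. max 0 (x - T)"] intg[OF that] by auto
  have gP: "g t = (\<integral>w. max 0 (w t - T) \<partial>P)" if "t < n" for t
    unfolding P_def g_def using marg_int(1)[OF dist borel that, where f="\<lambda>x. max 0 (x - T)"] by auto
  have "(\<Sum>t<n. g t) = (\<integral>w. (\<Sum>t<n. max 0 (w t - T)) \<partial>P)"
    using gP intG by (simp add: Bochner_Integration.integral_sum)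
  moreover have "(\<integral>w. (\<Sum>j=1..k. jth_largest n w j) \<partial>P) \<le> (\<integral>w. real k * T + (\<Sum>t<n. max 0 (w t - T)) \<partial>P)"
  proof (rule integral_mono)
    show "integrable P (\<lambda>w. \<Sum>j=1..k. jth_largest n w j)"
      using intY by (rule Bochner_Integration.integrable_sum)
    show "integrable P (\<lambda>w. real k * T + (\<Sum>t<n. max 0 (w t - T)))"
      using intG by (intro Bochner_Integration.integrable_add Bochner_Integration.integrable_sum) auto
    show "(\<Sum>j=1..k. jth_largest n w j) \<le> real k * T + (\<Sum>t<n. max 0 (w t - T))" for w
      by (rule comb_ineq[OF n_ge_k])
  qed
  moreover have "(\<integral>w. real k * T + (\<Sum>t<n. max 0 (w t - T)) \<partial>P) = real k * T + (\<integral>w. (\<Sum>t<n. max 0 (w t - T)) \<partial>P)"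
    using intG by (subst Bochner_Integration.integral_add) (auto simp: PP.prob_space intro!: Bochner_Integration.integrable_sum)
  moreover have "(\<integral>w. (\<Sum>j=1..k. jth_largest n w j) \<partial>P) = 2 * real k * T"
    using sumint k_pos by (simp add: T_def)
  ultimately have gbig: "real k * T \<le> (\<Sum>t<n. g t)" by linarith
  have cT: "T \<le> (1 / real k) * (\<Sum>t\<in>{n-n..<n}. g t)"
    using gbig k_pos by (simp add: field_simps lessThan_atLeast0)
  have main: "min T ((1 / real k) * (\<Sum>t\<in>{n-n..<n}. \<integral>v. max 0 (v - T) \<partial>F t)) \<le> cont_util q F i n n {0..<k}"
  proof (rule main_induct[where q = q and F = F and k = k and T = T])
    show "prob_space (F t)" if "t < n" for t using dist that .
    show "integrable (F t) (\<lambda>v. v)" if "t < n" for t using finite_mean that .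
    show "0 \<le> q j t v A \<and> q j t v A \<le> 1" if "A \<subseteq> {0..<k}" "j \<in> A" for j t v A
      using others[of j] that by (auto simp: q_def threshold_strategy_def valid_strategy_def)
    show "(\<lambda>v. q j t v A) \<in> borel_measurable (F t)" if "t < n" "A \<subseteq> {0..<k}" "j \<in> A" for j t A
    proof (cases "j = i")
      case True
      have "(\<lambda>v. if T \<le> v then 1 else 0 :: real) \<in> borel_measurable borel" by measurable
      then have "(\<lambda>v. if T \<le> v then 1 else 0 :: real) \<in> borel_measurable (F t)"
        using meas_borel[OF that(1)] by blast
      then show ?thesis using True by (simp add: q_def threshold_strategy_def)
    next
      case False
      then have "(\<lambda>v. p j t v A) \<in> borel_measurable borel"
        using others[of j] that by (auto simp: valid_strategy_def)
      then have "(\<lambda>v. p j t v A) \<in> borel_measurable (F t)"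
        using meas_borel[OF that(1)] by blast
      then show ?thesis using False by (simp add: q_def)
    qed
    show "q i t v A = (if T \<le> v then 1 else 0)" for t v A by (simp add: q_def threshold_strategy_def)
  qed (use n_ge_k i_agent in auto)
  have "T \<le> utility q F k n i"
    using main cT by (simp add: utility_def g_def)
  then show ?thesis
    using sumint by (simp add: q_def T_def P_def)
qed


end
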